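(* Let $k\ge2$ and $n\le0$. Then $$\mathcal{F}_{n,k}(x)=\sum_{\substack{j_1,\dots,j_k\ge0\\ j_1+2j_2+\dots+kj_k=|n|+1-k}}(-1)^{J-j_k}\,\frac{J!}{j_1!\,j_2!\cdots j_k!}\,x^{|n|+1-k(1+j_k)},\qquad J=j_1+\dots+j_k,$$ where an empty sum is $0$.
   Context: For $k\ge2$, the polynomials $\mathcal{F}_{n,k}(x)\in\mathbb{Z}[x]$ ($n\in\mathbb{Z}$) are defined by $\mathcal{F}_{1,k}=1$, $\mathcal{F}_{n,k}=0$ for $n=0,-1,\dots,-(k-2)$, and $\mathcal{F}_{n,k}(x)=\sum_{j=1}^{k}x^{k-j}\mathcal{F}_{n-j,k}(x)$ for all $n\in\mathbb{Z}$. This recurrence is used upwards for $n\ge2$, and downwards for $n\le-(k-1)$ as $\mathcal{F}_{n,k}=\mathcal{F}_{n+k,k}-\sum_{j=1}^{k-1}x^j\mathcal{F}_{n+j,k}$. *)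

theory Defs
  imports "HOL-Computational_Algebra.Polynomial"
begin

text \<open>Base values:
  F_{1,k} = 1 and F_{n,k} = 0 for 2-k <= n <= 0; upward recurrence for n >= 2;
  downward recurrence for n <= 1-k.  (For k < 2, where the paper does not define
  the family, we set it to 0.)\<close>

function Fpoly :: "nat \<Rightarrow> int \<Rightarrow> int poly" where
  "Fpoly k n =
     (if k < 2 then 0
      else if n = 1 then 1
      else if 2 - int k \<le> n \<and> n \<le> 0 then 0
      else if n \<ge> 2 then (\<Sum>j\<in>{1..k}. monom 1 (k - j) * Fpoly k (n - int j))
      else Fpoly k (n + int k) - (\<Sum>j\<in>{1..k-1}. monom 1 j * Fpoly k (n + int j)))"
  by pat_completeness auto
termination
  by (relation "measure (\<lambda>(k, n). if k < 2 \<or> (2 - int k \<le> n \<and> n \<le> 1) then 0 else nat \<bar>n\<bar>)")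
     auto

end

theory Submission
  imports Defs
begin

declare Fpoly.simps[simp del]

definition Dset :: "nat \<Rightarrow> int \<Rightarrow> (nat \<Rightarrow> nat) set" where
  "Dset k s = {j. (\<forall>i. i \<notin> {1..k} \<longrightarrow> j i = 0) \<and> int (\<Sum>i=1..k. i * j i) = s}"

definition Mn :: "nat \<Rightarrow> (nat \<Rightarrow> nat) \<Rightarrow> nat" where
  "Mn k j = fact (\<Sum>i=1..k. j i) div (\<Prod>i=1..k. fact (j i))"

definition wt :: "nat \<Rightarrow> int \<Rightarrow> (nat \<Rightarrow> nat) \<Rightarrow> int poly" where
  "wt k s j = monom ((-1) ^ ((\<Sum>i=1..k. j i) - j k) * int (Mn k j)) (nat (s - int k * int (j k)))"

definition Tp :: "nat \<Rightarrow> int \<Rightarrow> int poly" where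
  "Tp k s = (\<Sum>j\<in>Dset k s. wt k s j)"

lemma fact_prod_dvd: "finite A \<Longrightarrow> (\<Prod>i\<in>A. fact (j i) :: nat) dvd fact (\<Sum>i\<in>A. j i)"
proof (induction A rule: finite_induct)
  case empty then show ?case by simp
next
  case (insert x A)
  have "fact (j x) * (\<Prod>i\<in>A. fact (j i)) dvd fact (j x) * (fact (\<Sum>i\<in>A. j i) :: nat)"
    using insert.IH by (rule mult_dvd_mono[OF dvd_refl])
  also have "\<dots> dvd fact (j x + (\<Sum>i\<in>A. j i))" by (rule fact_fact_dvd_fact)
  finally show ?case using insert by simp
qed

lemma Mn_mult: "Mn k j * (\<Prod>i=1..k. fact (j i)) = fact (\<Sum>i=1..k. j i)"
  unfolding Mn_def by (rule dvd_div_mult_self) (simp add: fact_prod_dvd)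

lemma sum_upd:
  fixes g :: "nat \<Rightarrow> nat \<Rightarrow> 'b::comm_monoid_add"
  assumes "i \<in> {1..k}"
  shows "(\<Sum>l=1..k. g l ((j(i:=v)) l)) = g i v + (\<Sum>l\<in>{1..k}-{i}. g l (j l))"
proof -
  have "(\<Sum>l=1..k. g l ((j(i:=v)) l)) = g i ((j(i:=v)) i) + (\<Sum>l\<in>{1..k}-{i}. g l ((j(i:=v)) l))"
    by (rule sum.remove) (use assms in auto)
  also have "(\<Sum>l\<in>{1..k}-{i}. g l ((j(i:=v)) l)) = (\<Sum>l\<in>{1..k}-{i}. g l (j l))"
    by (rule sum.cong) auto
  finally show ?thesis by simp
qed

lemma sum_rem:
  fixes g :: "nat \<Rightarrow> nat \<Rightarrow> 'b::comm_monoid_add"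
  assumes "i \<in> {1..k}"
  shows "(\<Sum>l=1..k. g l (j l)) = g i (j i) + (\<Sum>l\<in>{1..k}-{i}. g l (j l))"
  using sum_upd[OF assms, of g j "j i"] by simp

lemma prod_upd:
  fixes g :: "nat \<Rightarrow> nat \<Rightarrow> 'b::comm_monoid_mult"
  assumes "i \<in> {1..k}"
  shows "(\<Prod>l=1..k. g l ((j(i:=v)) l)) = g i v * (\<Prod>l\<in>{1..k}-{i}. g l (j l))"
proof -
  have "(\<Prod>l=1..k. g l ((j(i:=v)) l)) = g i ((j(i:=v)) i) * (\<Prod>l\<in>{1..k}-{i}. g l ((j(i:=v)) l))"
    by (rule prod.remove) (use assms in auto)
  also have "(\<Prod>l\<in>{1..k}-{i}. g l ((j(i:=v)) l)) = (\<Prod>l\<in>{1..k}-{i}. g l (j l))"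
    by (rule prod.cong) auto
  finally show ?thesis by simp
qed

lemma prod_rem:
  fixes g :: "nat \<Rightarrow> nat \<Rightarrow> 'b::comm_monoid_mult"
  assumes "i \<in> {1..k}"
  shows "(\<Prod>l=1..k. g l (j l)) = g i (j i) * (\<Prod>l\<in>{1..k}-{i}. g l (j l))"
  using prod_upd[OF assms, of g j "j i"] by simp

lemma Mn_rec:
  assumes J: "(\<Sum>i=1..k. j i) > 0"
  shows "Mn k j = (\<Sum>i=1..k. if j i > 0 then Mn k (j(i := j i - 1)) else 0)"
proof -
  define J where "J = (\<Sum>i=1..k. j i)"
  define P where "P = (\<lambda>j. \<Prod>i=1..k. fact (j i) :: nat)"
  have Ppos: "P j > 0" unfolding P_def by (simp add: prod_pos)
  have trm: "j i * fact (J - 1) = (if j i > 0 then Mn k (j(i := j i - 1)) * P j else 0)"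
    if i: "i \<in> {1..k}" for i
  proof (cases "j i > 0")
    case True
    let ?d = "j(i := j i - 1)"
    have s1: "(\<Sum>l=1..k. ?d l) = (j i - 1) + (\<Sum>l\<in>{1..k}-{i}. j l)"
      using sum_upd[OF i, of "\<lambda>l x. x" j "j i - 1"] by simp
    have s2: "J = j i + (\<Sum>l\<in>{1..k}-{i}. j l)"
      unfolding J_def using sum_rem[OF i, of "\<lambda>l x. x" j] by simp
    have sd: "(\<Sum>l=1..k. ?d l) = J - 1" using s1 s2 True by simp
    have p1: "P ?d = fact (j i - 1) * (\<Prod>l\<in>{1..k}-{i}. fact (j l))"
      unfolding P_def using prod_upd[OF i, of "\<lambda>l x. fact x" j "j i - 1"] by simp
    have p2: "P j = fact (j i) * (\<Prod>l\<in>{1..k}-{i}. fact (j l))"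
      unfolding P_def using prod_rem[OF i, of "\<lambda>l x. fact x" j] by simp
    have fj: "fact (j i) = j i * (fact (j i - 1) :: nat)" using True fact_reduce[of "j i", where 'a=nat] by simp
    have "fact (J - 1) = Mn k ?d * P ?d" using Mn_mult[of k ?d] sd unfolding P_def by simp
    then have "j i * fact (J - 1) = Mn k ?d * (j i * P ?d)" by simp
    also have "j i * P ?d = P j" using p1 p2 fj by simp
    finally show ?thesis unfolding if_P[OF True] .
  qed simp
  have "Mn k j * P j = fact J" unfolding P_def J_def by (rule Mn_mult)
  also have "\<dots> = J * fact (J - 1)" using J fact_reduce[of J, where 'a=nat] unfolding J_def[symmetric] by simp
  also have "\<dots> = (\<Sum>i=1..k. j i * fact (J - 1))" unfolding J_def by (simp add: sum_distrib_right)
  also have "\<dots> = (\<Sum>i=1..k. if j i > 0 then Mn k (j(i := j i - 1)) * P j else 0)"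
    by (rule sum.cong[OF refl]) (use trm in simp)
  also have "\<dots> = (\<Sum>i=1..k. if j i > 0 then Mn k (j(i := j i - 1)) else 0) * P j"
    by (simp add: sum_distrib_right, rule sum.cong, auto)
  finally show ?thesis using Ppos by simp
qed

lemma Dset_finite: "finite (Dset k s)"
proof -
  have "Dset k s \<subseteq> {f. \<forall>x. (x \<in> {1..k} \<longrightarrow> f x \<in> {0..nat s}) \<and> (x \<notin> {1..k} \<longrightarrow> f x = 0)}"
  proof safe
    fix f x assume f: "f \<in> Dset k s" and x: "x \<in> {1..k}"
    have "f x \<le> x * f x" using x by simp
    also have "\<dots> \<le> (\<Sum>i=1..k. i * f i)" by (rule member_le_sum) (use x in auto)
    finally show "f x \<in> {0..nat s}" using f unfolding Dset_def by (auto simp del: of_nat_sum)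
  next
    fix f x assume "f \<in> Dset k s" "x \<notin> {1..k}"
    then show "f x = 0" unfolding Dset_def by auto
  qed
  moreover have "finite {f. \<forall>x. (x \<in> {1..k} \<longrightarrow> f x \<in> {0..nat s}) \<and> (x \<notin> {1..k} \<longrightarrow> f x = (0::nat))}"
    by (rule finite_set_of_finite_funs) auto
  ultimately show ?thesis by (rule finite_subset)
qed

lemma Dset_neg: "s < 0 \<Longrightarrow> Dset k s = {}"
  unfolding Dset_def by (auto simp del: of_nat_sum)

lemma Tp_neg: "s < 0 \<Longrightarrow> Tp k s = 0"
  unfolding Tp_def by (simp add: Dset_neg)

lemma Dset_0: "Dset k 0 = {\<lambda>_. 0}"
proof -
  have "j = (\<lambda>_. 0)" if "j \<in> Dset k 0" for j
  proof
    fix x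
    show "j x = 0"
    proof (cases "x \<in> {1..k}")
      case True
      have "x * j x \<le> (\<Sum>i=1..k. i * j i)" by (rule member_le_sum) (use True in auto)
      then show ?thesis using that True unfolding Dset_def by (auto simp del: of_nat_sum)
    qed (use that in \<open>auto simp: Dset_def\<close>)
  qed
  then show ?thesis unfolding Dset_def by auto
qed

lemma Tp_0: "Tp k 0 = 1"
  unfolding Tp_def Dset_0 wt_def Mn_def by (simp add: one_pCons)

lemma key:
  assumes k: "k \<ge> 2" and a: "a \<in> Dset k s" and i: "i \<in> {1..k}" and ai: "a i > 0"
  shows "monom ((-1) ^ ((\<Sum>l=1..k. a l) - a k) * int (Mn k (a(i := a i - 1)))) (nat (s - int k * int (a k)))
       = (if i = k then 1 else - monom 1 i) * wt k (s - int i) (a(i := a i - 1))"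
proof -
  define d where "d = a(i := a i - 1)"
  define J where "J = (\<Sum>l=1..k. a l)"
  have kk: "k \<in> {1..k}" using k by auto
  have sa: "int (\<Sum>l=1..k. l * a l) = s" using a unfolding Dset_def by (simp del: of_nat_sum)
  have Jd: "(\<Sum>l=1..k. d l) = J - 1"
    using sum_upd[OF i, of "\<lambda>l x. x" a "a i - 1"] sum_rem[OF i, of "\<lambda>l x. x" a] ai
    unfolding d_def J_def by simp
  have Wd: "(\<Sum>l=1..k. l * d l) + i = (\<Sum>l=1..k. l * a l)"
    using sum_upd[OF i, of "\<lambda>l x. l * x" a "a i - 1"] sum_rem[OF i, of "\<lambda>l x. l * x" a] ai
    unfolding d_def
  proof -
    have "i * (a i - 1) + i = i * a i" using ai by (cases "a i") auto
    then show "(\<Sum>l = 1..k. l * (a(i := a i - 1)) l) + i = (\<Sum>l = 1..k. l * a l)"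
      using sum_upd[OF i, of "\<lambda>l x. l * x" a "a i - 1"] sum_rem[OF i, of "\<lambda>l x. l * x" a] by simp
  qed
  show ?thesis
  proof (cases "i = k")
    case True
    have dk: "d k = a k - 1" unfolding d_def using True by simp
    have akJ: "a k \<le> J" unfolding J_def by (rule member_le_sum) (use kk in auto)
    have e1: "J - 1 - (a k - 1) = J - a k" using ai True akJ by simp
    have e2: "nat (s - int k - int k * int (a k - Suc 0)) = nat (s - int k * int (a k))"
      using ai True by (simp add: of_nat_diff algebra_simps)
    show ?thesis unfolding wt_def Jd[unfolded d_def] using True dk e1
      unfolding d_def J_def by (simp add: e2)
  next
    case False
    have dk: "d k = a k" unfolding d_def using False by simp
    have R: "J = a k + (\<Sum>l\<in>{1..k}-{k}. a l)"
      using sum_rem[OF kk, of "\<lambda>l x. x" a] unfolding J_def by simp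
    have "a i \<le> (\<Sum>l\<in>{1..k}-{k}. a l)" by (rule member_le_sum) (use i False in auto)
    then have aJ: "a k + a i \<le> J" using R by simp
    have e1: "J - a k = Suc (J - 1 - a k)" using aJ ai by simp
    have RW: "(\<Sum>l=1..k. l * a l) = k * a k + (\<Sum>l\<in>{1..k}-{k}. l * a l)"
      using sum_rem[OF kk, of "\<lambda>l x. l * x" a] by simp
    have "i * a i \<le> (\<Sum>l\<in>{1..k}-{k}. l * a l)" by (rule member_le_sum) (use i False in auto)
    moreover have "i \<le> i * a i" using ai by simp
    ultimately have "k * a k + i \<le> (\<Sum>l=1..k. l * a l)" unfolding RW by linarith
    then have "int (k * a k + i) \<le> s" using sa by (metis of_nat_le_iff)
    then have le: "int k * int (a k) + int i \<le> s" by simp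
    have e2: "nat (s - int k * int (a k)) = i + nat (s - int i - int k * int (a k))"
      using le by simp
    show ?thesis unfolding wt_def Jd[unfolded d_def] using False dk
      unfolding d_def J_def[symmetric] e2 e1
      by (simp add: mult_monom minus_monom)
  qed
qed

lemma Tp_rec:
  assumes k: "k \<ge> 2" and s: "s \<ge> 1"
  shows "Tp k s = (\<Sum>i=1..k. (if i = k then 1 else - monom 1 i) * Tp k (s - int i))"
proof -
  define g where "g = (\<lambda>i a. monom ((-1) ^ ((\<Sum>l=1..k. a l) - a k) * int (Mn k (a(i := a i - 1))))
      (nat (s - int k * int (a k))))"
  have step1: "wt k s a = (\<Sum>i=1..k. if a i > 0 then g i a else 0)" if a: "a \<in> Dset k s" for a
  proof -
    have J: "(\<Sum>l=1..k. a l) > 0"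
    proof (rule ccontr)
      assume "\<not> ?thesis"
      then have "\<forall>l\<in>{1..k}. a l = 0" by simp
      then have "(\<Sum>l=1..k. l * a l) = 0" by simp
      then show False using a s unfolding Dset_def by (simp del: of_nat_sum)
    qed
    have "wt k s a = monom (\<Sum>i=1..k. (-1) ^ ((\<Sum>l=1..k. a l) - a k) *
        int (if a i > 0 then Mn k (a(i := a i - 1)) else 0)) (nat (s - int k * int (a k)))"
      unfolding wt_def Mn_rec[OF J] by (simp add: sum_distrib_left)
    also have "\<dots> = (\<Sum>i=1..k. if a i > 0 then g i a else 0)"
      unfolding monom_sum g_def by (rule sum.cong) auto
    finally show ?thesis .
  qed
  have step3: "(\<Sum>a\<in>Dset k s. if a i > 0 then g i a else 0) =
      (if i = k then 1 else - monom 1 i) * Tp k (s - int i)" if i: "i \<in> {1..k}" for i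
  proof -
    have "(\<Sum>a\<in>Dset k s. if a i > 0 then g i a else 0) = (\<Sum>a\<in>{a\<in>Dset k s. a i > 0}. g i a)"
      by (rule sum.inter_filter[symmetric]) (rule Dset_finite)
    also have "\<dots> = (\<Sum>b\<in>Dset k (s - int i). (if i = k then 1 else - monom 1 i) * wt k (s - int i) b)"
    proof (rule sum.reindex_bij_witness[where i = "\<lambda>b. b(i := Suc (b i))" and j = "\<lambda>a. a(i := a i - 1)"])
      fix a assume "a \<in> {a\<in>Dset k s. a i > 0}"
      then show "(a(i := a i - 1))(i := Suc ((a(i := a i - 1)) i)) = a" by auto
    next
      fix a assume a: "a \<in> {a\<in>Dset k s. a i > 0}"
      have "(\<Sum>l=1..k. l * (a(i := a i - 1)) l) + i = (\<Sum>l=1..k. l * a l)"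
      proof -
        have "i * (a i - 1) + i = i * a i" using a by (cases "a i") auto
        then show ?thesis
          using sum_upd[OF i, of "\<lambda>l x. l * x" a "a i - 1"] sum_rem[OF i, of "\<lambda>l x. l * x" a] by simp
      qed
      then have "int (\<Sum>l=1..k. l * (a(i := a i - 1)) l) + int i = int (\<Sum>l=1..k. l * a l)"
        by (metis of_nat_add)
      then show "a(i := a i - 1) \<in> Dset k (s - int i)"
        using a i unfolding Dset_def by (auto simp del: of_nat_sum)
    next
      fix b assume "b \<in> Dset k (s - int i)"
      then show "(b(i := Suc (b i)))(i := (b(i := Suc (b i))) i - 1) = b" by auto
    next
      fix b assume b: "b \<in> Dset k (s - int i)"
      have "(\<Sum>l=1..k. l * (b(i := Suc (b i))) l) = i * Suc (b i) + (\<Sum>l\<in>{1..k}-{i}. l * b l)"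
        using sum_upd[OF i, of "\<lambda>l x. l * x" b "Suc (b i)"] by simp
      also have "\<dots> = (\<Sum>l=1..k. l * b l) + i"
        using sum_rem[OF i, of "\<lambda>l x. l * x" b] by simp
      finally have "int (\<Sum>l=1..k. l * (b(i := Suc (b i))) l) = int (\<Sum>l=1..k. l * b l) + int i"
        by simp
      then show "b(i := Suc (b i)) \<in> {a\<in>Dset k s. a i > 0}"
        using b i unfolding Dset_def by (auto simp del: of_nat_sum)
    next
      fix a assume a: "a \<in> {a\<in>Dset k s. a i > 0}"
      show "(if i = k then 1 else - monom 1 i) * wt k (s - int i) (a(i := a i - 1)) = g i a"
        unfolding g_def using key[OF k _ i, of a s] a by simp
    qed
    also have "\<dots> = (if i = k then 1 else - monom 1 i) * Tp k (s - int i)"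
      unfolding Tp_def by (simp add: sum_distrib_left)
    finally show ?thesis .
  qed
  have "Tp k s = (\<Sum>a\<in>Dset k s. \<Sum>i=1..k. if a i > 0 then g i a else 0)"
    unfolding Tp_def by (rule sum.cong) (auto simp: step1)
  also have "\<dots> = (\<Sum>i=1..k. \<Sum>a\<in>Dset k s. if a i > 0 then g i a else 0)"
    by (rule sum.swap)
  also have "\<dots> = (\<Sum>i=1..k. (if i = k then 1 else - monom 1 i) * Tp k (s - int i))"
    by (rule sum.cong) (auto simp: step3)
  finally show ?thesis .
qed

lemma Fp_down: "k \<ge> 2 \<Longrightarrow> n \<le> 1 - int k \<Longrightarrow>
  Fpoly k n = Fpoly k (n + int k) - (\<Sum>j\<in>{1..k-1}. monom 1 j * Fpoly k (n + int j))"
  by (subst Fpoly.simps) simp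

lemma Fp_zero: "k \<ge> 2 \<Longrightarrow> 2 - int k \<le> n \<Longrightarrow> n \<le> 0 \<Longrightarrow> Fpoly k n = 0"
  by (subst Fpoly.simps) simp

lemma Fp_one: "k \<ge> 2 \<Longrightarrow> Fpoly k 1 = 1"
  by (subst Fpoly.simps) simp

lemma FT: assumes k: "k \<ge> 2" shows "s \<ge> 1 - int k \<Longrightarrow> Fpoly k (1 - int k - s) = Tp k s"
proof (induction "nat (s + int k)" arbitrary: s rule: less_induct)
  case less
  consider "s < 0" | "s = 0" | "s \<ge> 1" by linarith
  then show ?case
  proof cases
    case 1
    then show ?thesis using Fp_zero[OF k] Tp_neg less.prems by simp
  next
    case 2
    have "Fpoly k (1 - int k) = Fpoly k 1 - (\<Sum>j\<in>{1..k-1}. monom 1 j * Fpoly k (1 - int k + int j))"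
      using Fp_down[OF k, of "1 - int k"] by simp
    also have "(\<Sum>j\<in>{1..k-1}. monom 1 j * Fpoly k (1 - int k + int j)) = 0"
      by (rule sum.neutral) (use Fp_zero[OF k] in auto)
    finally show ?thesis using 2 Fp_one[OF k] Tp_0 by simp
  next
    case 3
    have IH: "Fpoly k (1 - int k - s') = Tp k s'" if "s' < s" "s' \<ge> 1 - int k" for s'
      using less.hyps[of s'] that by simp
    have "Fpoly k (1 - int k - s) = Fpoly k (1 - s) - (\<Sum>j\<in>{1..k-1}. monom 1 j * Fpoly k (1 - int k - s + int j))"
      using Fp_down[OF k, of "1 - int k - s"] 3 by simp
    also have "Fpoly k (1 - s) = Tp k (s - int k)"
      using IH[of "s - int k"] k 3 by simp
    also have "(\<Sum>j\<in>{1..k-1}. monom 1 j * Fpoly k (1 - int k - s + int j)) =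
               (\<Sum>j\<in>{1..k-1}. monom 1 j * Tp k (s - int j))"
    proof (rule sum.cong[OF refl])
      fix j assume j: "j \<in> {1..k-1}"
      have "Fpoly k (1 - int k - (s - int j)) = Tp k (s - int j)"
        by (rule IH) (use j 3 in auto)
      then show "monom 1 j * Fpoly k (1 - int k - s + int j) = monom 1 j * Tp k (s - int j)"
        by (simp add: algebra_simps)
    qed
    also have "Tp k (s - int k) - (\<Sum>j\<in>{1..k-1}. monom 1 j * Tp k (s - int j)) = Tp k s"
    proof -
      have kS: "k = Suc (k - 1)" using k by simp
      have "Tp k s = (\<Sum>i=1..Suc (k-1). (if i = k then 1 else - monom 1 i) * Tp k (s - int i))"
        using Tp_rec[OF k, of s] 3 kS by simp
      also have "\<dots> = (\<Sum>i=1..k-1. (if i = k then 1 else - monom 1 i) * Tp k (s - int i)) + Tp k (s - int k)"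
        using k by (subst sum.cl_ivl_Suc) (simp add: kS[symmetric])
      also have "(\<Sum>i=1..k-1. (if i = k then 1 else - monom 1 i) * Tp k (s - int i)) =
                 (\<Sum>i=1..k-1. - (monom 1 i * Tp k (s - int i)))"
        by (rule sum.cong) auto
      finally show ?thesis by (simp add: sum_negf)
    qed
    finally show ?thesis .
  qed
qed

theorem mainTheorem7:
  fixes k :: nat and n :: int
  assumes "k \<ge> 2" and "n \<le> 0"
  shows "Fpoly k n =
    (\<Sum>j\<in>{j :: nat \<Rightarrow> nat. (\<forall>i. i \<notin> {1..k} \<longrightarrow> j i = 0) \<and>
                  int (\<Sum>i=1..k. i * j i) = \<bar>n\<bar> + 1 - int k}.
       let J = (\<Sum>i=1..k. j i) in
       monom ((-1) ^ (J - j k) * int (fact J div (\<Prod>i=1..k. fact (j i))))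
             (nat (\<bar>n\<bar> + 1 - int k * (1 + int (j k)))))"
proof -
  have "Fpoly k n = Tp k (\<bar>n\<bar> + 1 - int k)"
    using FT[OF assms(1), of "\<bar>n\<bar> + 1 - int k"] assms by simp
  also have "\<dots> = (\<Sum>j\<in>{j :: nat \<Rightarrow> nat. (\<forall>i. i \<notin> {1..k} \<longrightarrow> j i = 0) \<and>
                  int (\<Sum>i=1..k. i * j i) = \<bar>n\<bar> + 1 - int k}.
       let J = (\<Sum>i=1..k. j i) in
       monom ((-1) ^ (J - j k) * int (fact J div (\<Prod>i=1..k. fact (j i))))
             (nat (\<bar>n\<bar> + 1 - int k * (1 + int (j k)))))"
    unfolding Tp_def Dset_def wt_def Mn_def Let_def
  proof (rule sum.cong[OF refl])
    fix j :: "nat \<Rightarrow> nat"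
    have "nat (\<bar>n\<bar> + 1 - int k - int k * int (j k)) = nat (\<bar>n\<bar> + 1 - int k * (1 + int (j k)))"
      by (simp add: ring_distribs)
    then show "monom ((- 1) ^ (sum j {1..k} - j k) * int (fact (sum j {1..k}) div (\<Prod>i = 1..k. fact (j i))))
          (nat (\<bar>n\<bar> + 1 - int k - int k * int (j k))) =
         monom ((- 1) ^ (sum j {1..k} - j k) * int (fact (sum j {1..k}) div (\<Prod>i = 1..k. fact (j i))))
          (nat (\<bar>n\<bar> + 1 - int k * (1 + int (j k))))"
      by (simp only:)
  qed
  finally show ?thesis .
qed

end
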